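(* Let $d\ge2$ be an integer, $p^*=1-1/d$, and for integers $0\le w\le d-1$ and $p\in(0,1)$ let $$T_1(d,w,p)=\frac{d-w}{\ln\left(\frac{1}{1+p^d-p^w}\right)}.$$ Then for every integer $w$ with $0\le w\le d-1$, $T_1(d,w,p^* )\le T_1(d,d-1,p^* )$. *)

theory Defs
  imports Complex_Main
begin

definition T1 :: "nat \<Rightarrow> nat \<Rightarrow> real \<Rightarrow> real" where
  "T1 d w p = real (d - w) / ln (1 / (1 + p ^ d - p ^ w))"

end

theory Submission
  imports Defs
begin

lemma telesc:
  fixes p :: real
  assumes "0 \<le> p" "p \<le> 1"
  shows "real (Suc j) * ((1 - p) * p ^ (n + j)) \<le> p ^ n - p ^ (n + Suc j)"
proof (induction j)
  case 0
  then show ?case by (simp add: algebra_simps)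
next
  case (Suc j)
  have m: "p ^ (n + Suc j) \<le> p ^ (n + j)"
    by (rule power_decreasing) (use assms in auto)
  have "0 \<le> real (Suc j) * (1 - p)" using assms by simp
  hence "real (Suc j) * ((1 - p) * p ^ (n + Suc j)) \<le> real (Suc j) * ((1 - p) * p ^ (n + j))"
    using m by (metis mult.assoc mult_left_mono)
  moreover have "real (Suc (Suc j)) * ((1 - p) * p ^ (n + Suc j))
      = real (Suc j) * ((1 - p) * p ^ (n + Suc j)) + (p ^ (n + Suc j) - p ^ (n + Suc (Suc j)))"
    by (simp add: algebra_simps)
  ultimately show ?case using Suc.IH by linarith
qed

theorem lemma8:
  fixes d w :: nat
  assumes "d \<ge> 2" and "w \<le> d - 1"
  shows "T1 d w (1 - 1 / real d) \<le> T1 d (d - 1) (1 - 1 / real d)"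
proof -
  define p :: real where "p = 1 - 1 / real d"
  have p0: "0 < p" and p1: "p < 1" using assms(1) by (auto simp: p_def field_simps)
  have omp: "1 - p = 1 / real d" by (simp add: p_def)
  have "d - w > 0" using assms by linarith
  then obtain j where j: "d - w = Suc j" using gr0_implies_Suc by blast
  have dwj: "d = w + Suc j" using j assms by linarith
  define a where "a = p ^ (d - 1) - p ^ d"
  define b where "b = p ^ w - p ^ d"
  have a_eq: "a = (1 - p) * p ^ (w + j)"
    using dwj by (simp add: a_def algebra_simps)
  have kab: "real (Suc j) * a \<le> b"
    using telesc[of p j w] p0 p1 a_eq dwj by (simp add: b_def)
  have a0: "0 < a" using a_eq p0 p1 by simp
  have pw1: "p ^ (w + j) \<le> 1" by (rule power_le_one) (use p0 p1 in auto)
  have "(1 - p) * p ^ (w + j) \<le> 1 - p" by (rule mult_left_le) (use pw1 p1 in auto)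
  hence a1: "a < 1" using a_eq p0 by linarith
  have b1: "b < 1" unfolding b_def using p0 p1 by (smt (verit) power_le_one zero_less_power)
  have "p ^ d < p ^ w" by (rule power_strict_decreasing) (use p0 p1 dwj in auto)
  hence bpos: "0 < b" unfolding b_def by simp
  have bern: "1 + real (Suc j) * (- a) \<le> (1 + - a) ^ Suc j"
    by (rule Bernoulli_inequality) (use a1 in simp)
  have key: "1 - b \<le> (1 - a) ^ Suc j" using bern kab by simp
  have La: "ln (1 / (1 + p ^ d - p ^ (d - 1))) = - ln (1 - a)"
    using a1 by (simp add: a_def ln_div)
  have Lb: "ln (1 / (1 + p ^ d - p ^ w)) = - ln (1 - b)"
    using b1 by (simp add: b_def ln_div)
  have lna: "ln (1 - a) < 0" using a0 a1 by simp
  have lnb: "ln (1 - b) < 0" using bpos b1 by simp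
  have "ln ((1 - a) ^ Suc j) = real (Suc j) * ln (1 - a)"
    using a1 by (intro ln_realpow)
  moreover have "ln (1 - b) \<le> ln ((1 - a) ^ Suc j)"
    using key b1 by simp
  ultimately have ineq: "ln (1 - b) \<le> real (Suc j) * ln (1 - a)" by simp
  have dd: "d - (d - 1) = (1::nat)" using assms by simp
  have "T1 d w p = real (Suc j) / (- ln (1 - b))" unfolding T1_def Lb j by simp
  also have "\<dots> \<le> 1 / (- ln (1 - a))"
    using ineq lna lnb by (simp add: divide_simps)
  also have "\<dots> = T1 d (d - 1) p" unfolding T1_def La dd by simp
  finally show ?thesis unfolding p_def .
qed

end
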